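(* For each odd prime $p$ there are infinitely many primes $q$ with $q\equiv1\pmod p$ such that $q\not\equiv1\pmod{p^2}$ and $p$ is not a $p$-th power modulo $q$. *)

theory Defs
  imports "HOL-Number_Theory.Number_Theory"
begin

end

theory Submission
  imports Defs
begin

lemma geom_nat: "a \<ge> (1::nat) \<Longrightarrow> (a - 1) * (\<Sum>i<n. a^i) + 1 = a^n"
proof (induction n)
  case 0 then show ?case by simp
next
  case (Suc n)
  have "(a - 1) * (\<Sum>i<Suc n. a^i) + 1 = ((a - 1) * (\<Sum>i<n. a^i) + 1) + (a-1)*a^n"
    by (simp add: algebra_simps)
  also have "\<dots> = a^n + (a-1)*a^n" using Suc by simp
  also have "\<dots> = a^Suc n" using Suc.prems by (simp add: algebra_simps)
  finally show ?case .
qed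

lemma all_factors_cong1:
  fixes n m :: nat
  assumes "n > 0" "\<And>q. prime q \<Longrightarrow> q dvd n \<Longrightarrow> [q = 1] (mod m)"
  shows "[n = 1] (mod m)"
  using assms
proof (induction n rule: less_induct)
  case (less n)
  show ?case
  proof (cases "n = 1")
    case True then show ?thesis by simp
  next
    case False
    then obtain q where q: "prime q" "q dvd n" using prime_factor_nat by blast
    then obtain k where k: "n = q * k" by blast
    have "k > 0" using less.prems k by auto
    have "k < n" using k q prime_gt_1_nat \<open>k > 0\<close> by auto
    have "[k = 1] (mod m)"
      using less.IH[OF \<open>k < n\<close> \<open>k > 0\<close>] less.prems k by auto
    moreover have "[q = 1] (mod m)" using less.prems q by auto
    ultimately have "[q * k = 1 * 1] (mod m)" using cong_mult by blast
    then show ?thesis using k by simp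
  qed
qed

lemma key:
  fixes p c :: nat
  assumes p: "prime p" "odd p" and cop: "coprime p c"
  shows "\<exists>q. prime q \<and> [q = 1] (mod p) \<and> \<not> [q = 1] (mod p^2)
                     \<and> \<not> (\<exists>x :: nat. [x ^ p = p] (mod q)) \<and> \<not> q dvd c"
proof -
  define a where "a = p * c^p"
  define N where "N = (\<Sum>i<p. a^i)"
  have p2: "p > 2" using p prime_ge_2_nat[of p] by (metis le_neq_implies_less even_numeral)
  then obtain k where pk: "p = Suc (Suc k)" by (metis Suc_lessE less_2_cases_iff not_less_eq)
  have c0: "c > 0" using cop p by (cases "c = 0") auto
  have a1: "a \<ge> 1" using c0 p2 by (simp add: a_def)
  define S' where "S' = (\<Sum>i<k. a^i)"
  have NS: "N = 1 + a * (1 + a * S')"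
    unfolding N_def S'_def pk
    by (simp add: sum.lessThan_Suc_shift sum_distrib_left del: sum.lessThan_Suc)
  have "N > 0" using NS by simp
  have notN: "\<not> [N = 1] (mod p^2)"
  proof
    assume "[N = 1] (mod p^2)"
    then have "p^2 dvd N - 1" using cong_altdef_nat \<open>N > 0\<close> by simp
    moreover have "N - 1 = p * c^p + p^2 * (c^p * c^p * S')"
      using NS by (simp add: a_def power2_eq_square algebra_simps)
    ultimately have "p^2 dvd p * c^p"
      using dvd_add_left_iff[of "p^2" "p^2 * (c ^ p * c ^ p * S')" "p * c^p"] by simp
    then have "p dvd c^p" using p2 by (simp add: power2_eq_square)
    then have "p dvd c" using p prime_dvd_power by blast
    then show False using cop p coprime_common_divisor[of p c p] not_prime_unit[of p] by auto
  qed
  obtain q where q: "prime q" "q dvd N" "\<not> [q = 1] (mod p^2)"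
    using all_factors_cong1[OF \<open>N > 0\<close>] notN by blast
  have qa: "\<not> q dvd a"
  proof
    assume "q dvd a"
    then have "q dvd a * (1 + a * S')" by simp
    then have "q dvd 1" using q(2) NS by (metis dvd_add_left_iff)
    then show False using q by simp
  qed
  have qp: "q \<noteq> p" using qa by (auto simp: a_def)
  have qc: "\<not> q dvd c"
  proof
    assume "q dvd c"
    then have "q dvd c^p" by (simp add: pk)
    then show False using qa unfolding a_def by simp
  qed
  have ap: "[a^p = 1] (mod q)"
  proof -
    have "(a - 1) * N + 1 = a^p" using geom_nat[OF a1] N_def by simp
    then have "a^p - 1 = (a-1) * N" by simp
    then have "q dvd a^p - 1" using q(2) by simp
    then show ?thesis using cong_altdef_nat a1 by simp
  qed
  have ana1: "\<not> [a = 1] (mod q)"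
  proof
    assume "[a = 1] (mod q)"
    then have "[N = (\<Sum>i<p. 1^i)] (mod q)" unfolding N_def
      by (intro cong_sum cong_pow) auto
    then have "[N = p] (mod q)" by simp
    then have "q dvd p" using q(2) by (metis cong_dvd_iff)
    then show False using qp p q by (simp add: primes_dvd_imp_eq)
  qed
  have copqa: "coprime q a" using qa q(1) by (simp add: prime_imp_coprime)
  have ord1: "ord q a \<noteq> 1" using ana1 ord_divides[of a 1 q] by auto
  have "ord q a dvd p" using ap ord_divides by blast
  then have ordp: "ord q a = p" using ord1 p by (meson prime_nat_iff)
  have ferm: "[a^(q-1) = 1] (mod q)" using fermat_theorem q(1) qa by blast
  then have "p dvd q - 1" using ordp ord_divides by metis
  then obtain t where t: "q - 1 = p * t" by blast
  have q1: "q \<ge> 1" using q prime_ge_1_nat by blast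
  have qcong: "[q = 1] (mod p)" using cong_altdef_nat q1 t by simp
  have nopow: "\<not> (\<exists>x :: nat. [x ^ p = p] (mod q))"
  proof
    assume "\<exists>x :: nat. [x ^ p = p] (mod q)"
    then obtain x where x: "[x ^ p = p] (mod q)" by blast
    have "[(x*c)^p = a] (mod q)" unfolding a_def power_mult_distrib
      using x by (intro cong_mult) auto
    moreover have "\<not> q dvd (x*c)"
    proof
      assume "q dvd x*c"
      then have "q dvd (x*c)^p" by (simp add: pk)
      then have "q dvd a" using \<open>[(x*c)^p = a] (mod q)\<close> by (metis cong_dvd_iff)
      then show False using qa by simp
    qed
    ultimately have "[((x*c)^p)^t = a^t] (mod q)" using cong_pow by blast
    moreover have "[(x*c)^(q-1) = 1] (mod q)" using fermat_theorem q(1) \<open>\<not> q dvd (x*c)\<close> by blast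
    ultimately have "[a^t = 1] (mod q)" using t
      by (metis cong_sym cong_trans power_mult)
    then have "p dvd t" using ordp ord_divides by metis
    then have "p^2 dvd q - 1" using t by (simp add: power2_eq_square)
    then have "[q = 1] (mod p^2)" using cong_altdef_nat q1 by simp
    then show False using q(3) by simp
  qed
  show ?thesis using q qcong nopow qc by blast
qed

theorem proposition5p4:
  fixes p :: nat
  assumes "prime p" and "odd p"
  shows "infinite {q :: nat. prime q \<and> [q = 1] (mod p) \<and> \<not> [q = 1] (mod p^2)
                     \<and> \<not> (\<exists>x :: nat. [x ^ p = p] (mod q))}"
  (is "infinite ?A")
proof
  assume fin: "finite ?A"
  define c where "c = \<Prod>?A"
  have "coprime p c" unfolding c_def
  proof (rule prod_coprime_right)
    fix q assume "q \<in> ?A"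
    then have "prime q" "[q = 1] (mod p)" by auto
    then have "q \<noteq> p" using assms prime_gt_1_nat[of p] by (auto simp: cong_def)
    then show "coprime p q" using \<open>prime q\<close> assms(1) by (simp add: primes_coprime)
  qed
  then obtain q where q: "q \<in> ?A" "\<not> q dvd c" using key[OF assms] by blast
  have "q dvd c" unfolding c_def using fin q(1) by (rule dvd_prodI)
  then show False using q(2) by simp
qed

end
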